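(* Let $V$ be a vector space over a field $F$ and $T\in OP(V)$ have a vanishing polynomial, with minimal polynomial $p_m(x)=\sum_{i=0}^m a_ix^i$. If $T$ is surjective, then $a_0\neq0$ and $T$ is bijective.
   Context: $OP(V)$ is the set of all (not necessarily linear) maps $V\to V$; $T^0=I$, $T^{i}=T\circ T^{i-1}$, and for $p(x)=\sum a_ix^i$, $p(T)(v)=\sum a_iT^i(v)$. A vanishing polynomial of $T$ is a nonzero $p\in F[x]$ with $p(T)(v)=0$ for all $v$. The minimal polynomial of $T$ is the unique monic vanishing polynomial of $T$ of least degree. *)

theory Defs
  imports Main "HOL-Computational_Algebra.Polynomial"
begin

text \<open>V is a vector space over the field F, given by a scalar multiplication
  scale satisfying the locale vector_space. Operators in OP(V) are arbitrary
  (not necessarily linear) maps V to V.\<close>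

definition poly_op :: "('f::field \<Rightarrow> 'v::ab_group_add \<Rightarrow> 'v) \<Rightarrow> 'f poly \<Rightarrow> ('v \<Rightarrow> 'v) \<Rightarrow> 'v \<Rightarrow> 'v" where
  "poly_op scale p T v = (\<Sum>i\<le>degree p. scale (coeff p i) ((T ^^ i) v))"

definition vanishing_poly :: "('f::field \<Rightarrow> 'v::ab_group_add \<Rightarrow> 'v) \<Rightarrow> ('v \<Rightarrow> 'v) \<Rightarrow> 'f poly \<Rightarrow> bool" where
  "vanishing_poly scale T p \<longleftrightarrow> p \<noteq> 0 \<and> (\<forall>v. poly_op scale p T v = 0)"

definition minimal_poly :: "('f::field \<Rightarrow> 'v::ab_group_add \<Rightarrow> 'v) \<Rightarrow> ('v \<Rightarrow> 'v) \<Rightarrow> 'f poly \<Rightarrow> bool" where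
  "minimal_poly scale T p \<longleftrightarrow> lead_coeff p = 1 \<and> vanishing_poly scale T p \<and>
     (\<forall>q. vanishing_poly scale T q \<and> lead_coeff q = 1 \<longrightarrow> degree p \<le> degree q)"

end

theory Submission
  imports Defs
begin

lemma poly_op_pCons:
  assumes vs: "vector_space scale"
  shows "poly_op scale (pCons a q) T v = scale a v + poly_op scale q T (T v)"
proof (cases "q = 0")
  case True
  then show ?thesis using module.scale_zero_left[OF vs[folded module_iff_vector_space]]
    by (simp add: poly_op_def)
next
  case False
  have "poly_op scale (pCons a q) T v = (\<Sum>i\<le>Suc (degree q). scale (coeff (pCons a q) i) ((T ^^ i) v))"
    using False by (simp add: poly_op_def)
  also have "\<dots> = (\<Sum>i\<le>degree q. scale (coeff (pCons a q) (Suc i)) ((T ^^ Suc i) v)) + scale a v"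
    by (subst sum.atMost_Suc_shift) simp
  also have "\<dots> = scale a v + poly_op scale q T (T v)"
    by (simp add: poly_op_def funpow_Suc_right del: funpow.simps)
  finally show ?thesis .
qed

theorem mainTheorem14:
  fixes scale :: "'f::field \<Rightarrow> 'v::ab_group_add \<Rightarrow> 'v"
    and T :: "'v \<Rightarrow> 'v" and p :: "'f poly"
  assumes "vector_space scale"
    and "\<exists>q. vanishing_poly scale T q"
    and "minimal_poly scale T p"
    and "surj T"
  shows "coeff p 0 \<noteq> 0 \<and> bij T"
proof -
  note vs = assms(1)
  obtain a q where pq: "p = pCons a q" by (cases p) auto
  have a: "a = coeff p 0" using pq by simp
  have pnz: "p \<noteq> 0" and lc: "lead_coeff p = 1" and van: "\<And>v. poly_op scale p T v = 0"
    and mn: "\<And>r. vanishing_poly scale T r \<Longrightarrow> lead_coeff r = 1 \<Longrightarrow> degree p \<le> degree r"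
    using assms(3) by (auto simp: minimal_poly_def vanishing_poly_def)
  have eq: "\<And>v. scale a v + poly_op scale q T (T v) = 0"
    using van poly_op_pCons[OF vs] pq by metis
  have a0: "a \<noteq> 0"
  proof
    assume "a = 0"
    then have qnz: "q \<noteq> 0" using pnz pq by auto
    have "\<And>w. poly_op scale q T w = 0"
    proof -
      fix w obtain v where "w = T v" using assms(4) by (metis surjD)
      then show "poly_op scale q T w = 0" using eq[of v] \<open>a = 0\<close>
        module.scale_zero_left[OF vs[folded module_iff_vector_space]] by simp
    qed
    then have "vanishing_poly scale T q" using qnz by (simp add: vanishing_poly_def)
    moreover have "lead_coeff q = 1" using lc pq qnz by simp
    ultimately have "degree p \<le> degree q" using mn by blast
    then show False using pq qnz by simp
  qed
  have inj: "inj T"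
  proof (rule injI)
    fix u w assume h: "T u = T w"
    have "scale a u = scale a w"
      using eq[of u] eq[of w] h by (metis add_right_cancel)
    then have "scale (inverse a) (scale a u) = scale (inverse a) (scale a w)" by simp
    then show "u = w" using a0 by (simp add: module.scale_scale[OF vs[folded module_iff_vector_space]] module.scale_one[OF vs[folded module_iff_vector_space]])
  qed
  show ?thesis using a0 a inj assms(4) by (simp add: bij_def)
qed

end
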